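(* Let $b>0$, $\rho\in(\frac14,\frac12)$ and $h\in(0,1)$. If $m\in\mathbb Z$ satisfies $|m|>(1+\sqrt2)b/2$, then \[ \lambda_1\bigl(\mathcal H^{b,\rho}_{m,h}\bigr)>\inf_{\ell\in\mathbb Z}\lambda_1\bigl(\mathcal H^{b,\rho}_{\ell,h}\bigr). \]
   Context: Let $\delta=h^{\rho-\frac12}$. For $m\in\mathbb Z$, $\mathcal H^{b,\rho}_{m,h}$ is the self-adjoint operator in the weighted space $L^2((0,\delta);(1-h^{1/2}\tau)d\tau)$ associated with the quadratic form \[ v\mapsto\int_0^\delta\Bigl(|v'(\tau)|^2+\frac{h}{(1-h^{1/2}\tau)^2}\Bigl(m-\frac b2(1-h^{1/2}\tau)^2\Bigr)^2|v(\tau)|^2\Bigr)(1-h^{1/2}\tau)\,d\tau-|v(0)|^2 \] on $\{v\in H^1((0,\delta)):v(\delta)=0\}$ (boundary conditions $v'(0)=-v(0)$, $v(\delta)=0$). $\lambda_1(\cdot)$ denotes the lowest eigenvalue. *)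

theory Defs
  imports "HOL-Analysis.Analysis"
begin

text \<open>Form domain: v in H^1((0,delta)) with v(delta) = 0, represented by a continuous
  representative v on [0,delta] together with its weak derivative g in L^2(0,delta),
  v(x) = v(0) + int_0^x g.\<close>
definition H1_dirichlet_right :: "real \<Rightarrow> (real \<Rightarrow> real) \<Rightarrow> (real \<Rightarrow> real) \<Rightarrow> bool" where
  "H1_dirichlet_right \<delta> v g \<longleftrightarrow>
     g \<in> borel_measurable lborel \<and>
     set_integrable lborel {0..\<delta>} (\<lambda>t. (g t)\<^sup>2) \<and>
     (\<forall>x\<in>{0..\<delta>}. v x = v 0 + (LBINT t=0..x. g t)) \<and>
     v \<delta> = 0"

definition wgt :: "real \<Rightarrow> real \<Rightarrow> real" where
  "wgt h \<tau> = 1 - sqrt h * \<tau>"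

definition qform :: "real \<Rightarrow> real \<Rightarrow> real \<Rightarrow> int \<Rightarrow> (real \<Rightarrow> real) \<Rightarrow> (real \<Rightarrow> real) \<Rightarrow> real" where
  "qform b \<rho> h m v g =
     (LBINT \<tau>=0..h powr (\<rho> - 1/2).
        ((g \<tau>)\<^sup>2 + h / (wgt h \<tau>)\<^sup>2 * (real_of_int m - b/2 * (wgt h \<tau>)\<^sup>2)\<^sup>2 * (v \<tau>)\<^sup>2) * wgt h \<tau>)
     - (v 0)\<^sup>2"

definition wnorm2 :: "real \<Rightarrow> real \<Rightarrow> (real \<Rightarrow> real) \<Rightarrow> real" where
  "wnorm2 \<rho> h v = (LBINT \<tau>=0..h powr (\<rho> - 1/2). (v \<tau>)\<^sup>2 * wgt h \<tau>)"

text \<open>Lowest eigenvalue lambda_1 of H^{b,rho}_{m,h}, via the variational (min-max)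
  characterization: infimum of the Rayleigh quotient over the form domain.\<close>
definition lambda1 :: "real \<Rightarrow> real \<Rightarrow> int \<Rightarrow> real \<Rightarrow> real" where
  "lambda1 b \<rho> m h =
     Inf {qform b \<rho> h m v g / wnorm2 \<rho> h v | v g.
            H1_dirichlet_right (h powr (\<rho> - 1/2)) v g \<and> wnorm2 \<rho> h v \<noteq> 0}"

end

theory Submission
  imports Defs
begin

lemma basic_params:
  fixes h \<rho> :: real
  assumes "0 < h" "h < 1" "0 < \<rho>" "\<rho> < 1/2"
  shows "h powr (\<rho> - 1/2) > 1" "sqrt h * h powr (\<rho> - 1/2) = h powr \<rho>"
    "h powr \<rho> < 1" "0 < h powr \<rho>"
proof -
  show "h powr (\<rho> - 1/2) > 1"
    using assms by (metis (no_types, opaque_lifting) diff_gt_0_iff_gt divide_less_eq_1_pos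
    less_divide_eq_1_pos powr01_less_one powr_0 powr_diff powr_gt_zero)
  have "sqrt h = h powr (1/2)" using assms by (simp add: powr_half_sqrt)
  then show "sqrt h * h powr (\<rho> - 1/2) = h powr \<rho>"
    using assms by (simp add: powr_add[symmetric])
  show "h powr \<rho> < 1" using assms by (simp add: powr01_less_one)
  show "0 < h powr \<rho>" using assms by simp
qed

lemma wgt_bounds:
  fixes h \<rho> \<tau> :: real
  assumes "0 < h" "h < 1" "0 < \<rho>" "\<rho> < 1/2" "0 \<le> \<tau>" "\<tau> \<le> h powr (\<rho> - 1/2)"
  shows "1 - h powr \<rho> \<le> wgt h \<tau>" "wgt h \<tau> \<le> 1"
proof -
  have "sqrt h * \<tau> \<le> sqrt h * h powr (\<rho> - 1/2)"
    using assms by (intro mult_left_mono) auto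
  then show "1 - h powr \<rho> \<le> wgt h \<tau>" using basic_params[OF assms(1-4)] by (simp add: wgt_def)
  show "wgt h \<tau> \<le> 1" using assms by (simp add: wgt_def)
qed

lemma adm_facts:
  fixes D :: real
  assumes H: "H1_dirichlet_right D v g" and D: "0 \<le> D"
  shows "set_integrable lborel {0..D} g"
    and "set_integrable lborel {0..D} (\<lambda>t. (g t)\<^sup>2)"
    and "\<forall>x\<in>{0..D}. v x = v 0 + integral {0..x} g"
    and "continuous_on {0..D} v"
    and "g integrable_on {0..D}"
    and "(\<lambda>t. (g t)\<^sup>2) integrable_on {0..D}"
proof -
  have gm[measurable]: "g \<in> borel_measurable lborel" and g2: "set_integrable lborel {0..D} (\<lambda>t. (g t)\<^sup>2)"
    and vv: "\<forall>x\<in>{0..D}. v x = v 0 + (LBINT t=0..x. g t)"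
    using H unfolding H1_dirichlet_right_def by blast+
  show "set_integrable lborel {0..D} (\<lambda>t. (g t)\<^sup>2)" by (fact g2)
  have c1: "set_integrable lborel {0..D} (\<lambda>t. 1::real)"
    by (rule borel_integrable_atLeastAtMost') simp
  have "set_integrable lborel {0..D} (\<lambda>t. 1 + (g t)\<^sup>2)"
    using c1 g2 by (rule set_integral_add)
  moreover have "set_borel_measurable lborel {0..D} g"
    unfolding set_borel_measurable_def by measurable
  moreover have "AE x in lborel. x \<in> {0..D} \<longrightarrow> norm (g x) \<le> norm (1 + (g x)\<^sup>2)"
  proof (intro AE_I2 impI)
    fix x
    have "\<bar>g x\<bar> \<le> 1 + (g x)\<^sup>2"
    proof (cases "\<bar>g x\<bar> \<le> 1")
      case True then show ?thesis by (simp add: add_increasing2)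
    next
      case False
      then have "\<bar>g x\<bar> * 1 \<le> \<bar>g x\<bar> * \<bar>g x\<bar>" by (intro mult_left_mono) auto
      then show ?thesis by (simp add: power2_eq_square abs_mult_self_eq)
    qed
    then show "norm (g x) \<le> norm (1 + (g x)\<^sup>2)" by simp
  qed
  ultimately show gi: "set_integrable lborel {0..D} g" by (rule set_integrable_bound)
  show gI: "g integrable_on {0..D}" using set_borel_integral_eq_integral(1)[OF gi] .
  show "(\<lambda>t. (g t)\<^sup>2) integrable_on {0..D}" using set_borel_integral_eq_integral(1)[OF g2] .
  show vx: "\<forall>x\<in>{0..D}. v x = v 0 + integral {0..x} g"
  proof
    fix x assume x: "x \<in> {0..D}"
    have "set_integrable lborel {0..x} g"
      by (rule set_integrable_subset[OF gi]) (use x in auto)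
    then have "(LBINT t=ereal 0..ereal x. g t) = integral {0..x} g"
      using x by (intro interval_integral_eq_integral) auto
    then have "(LBINT t=0..x. g t) = integral {0..x} g" by (simp add: zero_ereal_def)
    moreover have "v x = v 0 + (LBINT t=0..x. g t)" using vv x by blast
    ultimately show "v x = v 0 + integral {0..x} g" by linarith
  qed
  have "continuous_on {0..D} (\<lambda>x. v 0 + integral {0..x} g)"
    by (rule continuous_on_add[OF continuous_on_const indefinite_integral_continuous_1[OF gI]])
  moreover have "continuous_on {0..D} v \<longleftrightarrow> continuous_on {0..D} (\<lambda>x. v 0 + integral {0..x} g)"
    by (rule continuous_on_cong) (use vx in blast)+
  ultimately show "continuous_on {0..D} v" by simp
qed

lemma cs_interval:
  fixes f :: "real \<Rightarrow> real"
  assumes x: "0 \<le> x" and fi: "f integrable_on {0..x}" and f2: "(\<lambda>t. (f t)\<^sup>2) integrable_on {0..x}"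
  shows "(integral {0..x} f)\<^sup>2 \<le> x * integral {0..x} (\<lambda>t. (f t)\<^sup>2)"
proof (cases "x = 0")
  case True then show ?thesis by simp
next
  case False
  with x have xp: "x > 0" by simp
  define I where "I = integral {0..x} f"
  define J where "J = integral {0..x} (\<lambda>t. (f t)\<^sup>2)"
  define a where "a = I / x"
  have e: "(\<lambda>t. (f t - a)\<^sup>2) = (\<lambda>t. ((f t)\<^sup>2 - (2*a) * f t) + a\<^sup>2)"
    by (auto simp: power2_eq_square algebra_simps)
  have i1: "(\<lambda>t. (2*a) * f t) integrable_on {0..x}" using fi by (rule integrable_on_mult_right)
  have i2: "(\<lambda>t. (f t)\<^sup>2 - (2*a) * f t) integrable_on {0..x}" using f2 i1 by (rule integrable_diff)
  have "integral {0..x} (\<lambda>t. (f t - a)\<^sup>2) = J - 2*a*I + a\<^sup>2 * x"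
    unfolding e using xp
    by (simp add: integral_add[OF i2 integrable_const_ivl] integral_diff[OF f2 i1] I_def J_def)
  moreover have "0 \<le> integral {0..x} (\<lambda>t. (f t - a)\<^sup>2)"
    by (rule integral_nonneg) (use i2 e in \<open>simp_all add: integrable_add integrable_const_ivl\<close>)
  ultimately have "0 \<le> J - 2*a*I + a\<^sup>2 * x" by simp
  also have "\<dots> = J - I\<^sup>2 / x" using xp by (simp add: a_def power2_eq_square field_simps)
  finally have "I\<^sup>2 / x \<le> J" by simp
  then show ?thesis using xp by (simp add: I_def J_def pos_divide_le_eq mult.commute)
qed

lemma trace_ineq:
  fixes v g :: "real \<Rightarrow> real"
  assumes s: "0 < s" "s \<le> D" and vc: "continuous_on {0..D} v"
    and gi: "g integrable_on {0..D}" and g2: "(\<lambda>t. (g t)\<^sup>2) integrable_on {0..D}"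
    and vx: "\<forall>x\<in>{0..D}. v x = v 0 + integral {0..x} g"
  shows "s * (v 0)\<^sup>2 \<le> 2 * integral {0..s} (\<lambda>x. (v x)\<^sup>2) + 2 * s\<^sup>2 * integral {0..D} (\<lambda>t. (g t)\<^sup>2)"
proof -
  define G where "G = integral {0..D} (\<lambda>t. (g t)\<^sup>2)"
  have pt: "(v 0)\<^sup>2 \<le> 2 * (v x)\<^sup>2 + 2 * s * G" if x: "x \<in> {0..s}" for x
  proof -
    have xD: "{0..x} \<subseteq> {0..D}" using x s by auto
    have gix: "g integrable_on {0..x}" by (rule integrable_on_subinterval[OF gi xD])
    have g2x: "(\<lambda>t. (g t)\<^sup>2) integrable_on {0..x}" by (rule integrable_on_subinterval[OF g2 xD])
    have "(integral {0..x} g)\<^sup>2 \<le> x * integral {0..x} (\<lambda>t. (g t)\<^sup>2)"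
      using x by (intro cs_interval gix g2x) auto
    also have "\<dots> \<le> s * G"
    proof (rule mult_mono)
      show "x \<le> s" using x by auto
      show "integral {0..x} (\<lambda>t. (g t)\<^sup>2) \<le> G" unfolding G_def
        by (rule integral_subset_le[OF xD g2x g2]) auto
      show "0 \<le> s" using s by simp
      show "0 \<le> integral {0..x} (\<lambda>t. (g t)\<^sup>2)" by (rule integral_nonneg[OF g2x]) auto
    qed
    finally have I: "(integral {0..x} g)\<^sup>2 \<le> s * G" .
    have "v x = v 0 + integral {0..x} g" using bspec[OF vx, of x] x s by auto
    then have "v 0 = v x - integral {0..x} g" by simp
    then have "(v 0)\<^sup>2 \<le> 2 * (v x)\<^sup>2 + 2 * (integral {0..x} g)\<^sup>2"
    proof -
      have "(a - b)\<^sup>2 \<le> 2*a\<^sup>2 + 2*b\<^sup>2" for a b :: real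
        using zero_le_power2[of "a+b"] by (simp add: power2_eq_square algebra_simps)
      then show ?thesis using \<open>v 0 = v x - integral {0..x} g\<close> by metis
    qed
    with I show ?thesis by simp
  qed
  have vcs: "continuous_on {0..s} v" by (rule continuous_on_subset[OF vc]) (use s in auto)
  have vi: "(\<lambda>x. (v x)\<^sup>2) integrable_on {0..s}"
    by (intro integrable_continuous_interval continuous_intros vcs)
  have "integral {0..s} (\<lambda>x. (v 0)\<^sup>2) \<le> integral {0..s} (\<lambda>x. 2 * (v x)\<^sup>2 + 2 * s * G)"
    by (rule integral_le) (use pt vi in \<open>auto intro!: integrable_add integrable_on_mult_right\<close>)
  also have "\<dots> = 2 * integral {0..s} (\<lambda>x. (v x)\<^sup>2) + 2 * s\<^sup>2 * G"
    by (subst integral_add[OF integrable_on_mult_right[OF vi] integrable_const_ivl]) (use s in \<open>simp add: power2_eq_square\<close>)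
  finally show ?thesis using s by (simp add: G_def)
qed


definition Vp :: "real \<Rightarrow> real \<Rightarrow> int \<Rightarrow> real \<Rightarrow> real" where
  "Vp b h l \<tau> = h / (wgt h \<tau>)\<^sup>2 * (real_of_int l - b/2 * (wgt h \<tau>)\<^sup>2)\<^sup>2"

context
  fixes h \<rho> :: real
  assumes h0: "0 < h" and h1: "h < 1" and r0: "0 < \<rho>" and r1: "\<rho> < 1/2"
begin

lemma wpos: "\<tau> \<in> {0..h powr (\<rho> - 1/2)} \<Longrightarrow> 0 < wgt h \<tau>"
  using wgt_bounds(1)[OF h0 h1 r0 r1, of \<tau>] basic_params(3)[OF h0 h1 r0 r1] by auto

lemma wcont: "continuous_on S (wgt h)"
  unfolding wgt_def by (intro continuous_intros)

lemma forms_eq: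
  assumes H: "H1_dirichlet_right (h powr (\<rho> - 1/2)) v g"
  defines "D \<equiv> h powr (\<rho> - 1/2)"
  shows "wnorm2 \<rho> h v = integral {0..D} (\<lambda>\<tau>. (v \<tau>)\<^sup>2 * wgt h \<tau>)"
    and "qform b \<rho> h l v g = integral {0..D} (\<lambda>\<tau>. (g \<tau>)\<^sup>2 * wgt h \<tau>)
            + integral {0..D} (\<lambda>\<tau>. Vp b h l \<tau> * (v \<tau>)\<^sup>2 * wgt h \<tau>) - (v 0)\<^sup>2"
    and "(\<lambda>\<tau>. (v \<tau>)\<^sup>2 * wgt h \<tau>) integrable_on {0..D}"
    and "(\<lambda>\<tau>. (g \<tau>)\<^sup>2 * wgt h \<tau>) integrable_on {0..D}"
    and "(\<lambda>\<tau>. Vp b h l \<tau> * (v \<tau>)\<^sup>2 * wgt h \<tau>) integrable_on {0..D}"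
proof -
  have D1: "D > 1" unfolding D_def by (rule basic_params(1)[OF h0 h1 r0 r1])
  have HD: "H1_dirichlet_right D v g" using H by (simp add: D_def)
  have D0: "0 \<le> D" using D1 by simp
  note A = adm_facts[OF HD D0]
  have gm[measurable]: "g \<in> borel_measurable lborel" using HD by (simp add: H1_dirichlet_right_def)
  have wm[measurable]: "wgt h \<in> borel_measurable lborel" unfolding wgt_def by measurable
  have wp: "\<And>\<tau>. \<tau> \<in> {0..D} \<Longrightarrow> 0 < wgt h \<tau>" using wpos by (simp add: D_def)
  have w1: "\<And>\<tau>. \<tau> \<in> {0..D} \<Longrightarrow> wgt h \<tau> \<le> 1" using wgt_bounds(2)[OF h0 h1 r0 r1] by (simp add: D_def)
  have c1: "continuous_on {0..D} (\<lambda>\<tau>. (v \<tau>)\<^sup>2 * wgt h \<tau>)"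
    by (intro continuous_intros A(4) wcont)
  have c2: "continuous_on {0..D} (\<lambda>\<tau>. Vp b h l \<tau> * (v \<tau>)\<^sup>2 * wgt h \<tau>)"
    unfolding Vp_def
    by (intro continuous_intros A(4) wcont) (use wp in force)+
  have s1: "set_integrable lborel {0..D} (\<lambda>\<tau>. (v \<tau>)\<^sup>2 * wgt h \<tau>)"
    by (rule borel_integrable_atLeastAtMost'[OF c1])
  have s3: "set_integrable lborel {0..D} (\<lambda>\<tau>. Vp b h l \<tau> * (v \<tau>)\<^sup>2 * wgt h \<tau>)"
    by (rule borel_integrable_atLeastAtMost'[OF c2])
  have s2: "set_integrable lborel {0..D} (\<lambda>\<tau>. (g \<tau>)\<^sup>2 * wgt h \<tau>)"
  proof (rule set_integrable_bound[OF A(2)])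
    show "set_borel_measurable lborel {0..D} (\<lambda>\<tau>. (g \<tau>)\<^sup>2 * wgt h \<tau>)"
      unfolding set_borel_measurable_def by measurable
    show "AE x in lborel. x \<in> {0..D} \<longrightarrow> norm ((g x)\<^sup>2 * wgt h x) \<le> norm ((g x)\<^sup>2)"
    proof (intro AE_I2 impI)
      fix x assume x: "x \<in> {0..D}"
      have "(g x)\<^sup>2 * wgt h x \<le> (g x)\<^sup>2 * 1" by (intro mult_left_mono w1 x) simp
      then show "norm ((g x)\<^sup>2 * wgt h x) \<le> norm ((g x)\<^sup>2)"
        using wp[OF x] by (simp add: abs_mult)
    qed
  qed
  have s12: "set_integrable lborel {0..D} (\<lambda>\<tau>. ((g \<tau>)\<^sup>2 + h / (wgt h \<tau>)\<^sup>2 * (real_of_int l - b/2 * (wgt h \<tau>)\<^sup>2)\<^sup>2 * (v \<tau>)\<^sup>2) * wgt h \<tau>)"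
    using set_integral_add(1)[OF s2 s3] by (simp add: Vp_def distrib_right)
  show i1: "(\<lambda>\<tau>. (v \<tau>)\<^sup>2 * wgt h \<tau>) integrable_on {0..D}"
    by (rule set_borel_integral_eq_integral(1)[OF s1])
  show i2: "(\<lambda>\<tau>. (g \<tau>)\<^sup>2 * wgt h \<tau>) integrable_on {0..D}"
    by (rule set_borel_integral_eq_integral(1)[OF s2])
  show i3: "(\<lambda>\<tau>. Vp b h l \<tau> * (v \<tau>)\<^sup>2 * wgt h \<tau>) integrable_on {0..D}"
    by (rule set_borel_integral_eq_integral(1)[OF s3])
  have "(LBINT \<tau>=ereal 0..ereal D. (v \<tau>)\<^sup>2 * wgt h \<tau>) = integral {0..D} (\<lambda>\<tau>. (v \<tau>)\<^sup>2 * wgt h \<tau>)"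
    by (rule interval_integral_eq_integral[OF D0 s1])
  then show "wnorm2 \<rho> h v = integral {0..D} (\<lambda>\<tau>. (v \<tau>)\<^sup>2 * wgt h \<tau>)"
    by (simp add: wnorm2_def D_def zero_ereal_def)
  have "(LBINT \<tau>=ereal 0..ereal D. ((g \<tau>)\<^sup>2 + h / (wgt h \<tau>)\<^sup>2 * (real_of_int l - b/2 * (wgt h \<tau>)\<^sup>2)\<^sup>2 * (v \<tau>)\<^sup>2) * wgt h \<tau>)
     = integral {0..D} (\<lambda>\<tau>. ((g \<tau>)\<^sup>2 + h / (wgt h \<tau>)\<^sup>2 * (real_of_int l - b/2 * (wgt h \<tau>)\<^sup>2)\<^sup>2 * (v \<tau>)\<^sup>2) * wgt h \<tau>)"
    by (rule interval_integral_eq_integral[OF D0 s12])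
  also have "\<dots> = integral {0..D} (\<lambda>\<tau>. (g \<tau>)\<^sup>2 * wgt h \<tau> + Vp b h l \<tau> * (v \<tau>)\<^sup>2 * wgt h \<tau>)"
    by (simp add: Vp_def distrib_right)
  also have "\<dots> = integral {0..D} (\<lambda>\<tau>. (g \<tau>)\<^sup>2 * wgt h \<tau>) + integral {0..D} (\<lambda>\<tau>. Vp b h l \<tau> * (v \<tau>)\<^sup>2 * wgt h \<tau>)"
    by (rule integral_add[OF i2 i3])
  finally show "qform b \<rho> h l v g = integral {0..D} (\<lambda>\<tau>. (g \<tau>)\<^sup>2 * wgt h \<tau>)
            + integral {0..D} (\<lambda>\<tau>. Vp b h l \<tau> * (v \<tau>)\<^sup>2 * wgt h \<tau>) - (v 0)\<^sup>2"
    by (simp add: qform_def D_def zero_ereal_def)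
qed

lemma bounds:
  assumes H: "H1_dirichlet_right (h powr (\<rho> - 1/2)) v g"
  shows "0 \<le> wnorm2 \<rho> h v"
    and "- (4 / (1 - h powr \<rho>)\<^sup>2) * wnorm2 \<rho> h v \<le> qform b \<rho> h l v g"
proof -
  define D where "D = h powr (\<rho> - 1/2)"
  define wm where "wm = 1 - h powr \<rho>"
  have D1: "D > 1" unfolding D_def by (rule basic_params(1)[OF h0 h1 r0 r1])
  have wm0: "0 < wm" "wm \<le> 1" using basic_params(3,4)[OF h0 h1 r0 r1] by (auto simp: wm_def)
  have HD: "H1_dirichlet_right D v g" using H by (simp add: D_def)
  have D0: "0 \<le> D" using D1 by simp
  note A = adm_facts[OF HD D0]
  note F = forms_eq[OF H, folded D_def]
  have wp: "\<And>\<tau>. \<tau> \<in> {0..D} \<Longrightarrow> 0 < wgt h \<tau>" using wpos by (simp add: D_def)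
  have wl: "\<And>\<tau>. \<tau> \<in> {0..D} \<Longrightarrow> wm \<le> wgt h \<tau>"
    using wgt_bounds(1)[OF h0 h1 r0 r1] by (simp add: D_def wm_def)
  define N where "N = integral {0..D} (\<lambda>\<tau>. (v \<tau>)\<^sup>2 * wgt h \<tau>)"
  define Gw where "Gw = integral {0..D} (\<lambda>\<tau>. (g \<tau>)\<^sup>2 * wgt h \<tau>)"
  define P where "P = integral {0..D} (\<lambda>\<tau>. Vp b h l \<tau> * (v \<tau>)\<^sup>2 * wgt h \<tau>)"
  have N0: "0 \<le> N" unfolding N_def
    by (rule integral_nonneg[OF F(3)]) (metis wp mult_nonneg_nonneg zero_le_power2 less_imp_le)
  then show "0 \<le> wnorm2 \<rho> h v" using F(1) N_def by simp
  have P0: "0 \<le> P" unfolding P_def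
  proof (rule integral_nonneg[OF F(5)])
    fix x assume x: "x \<in> {0..D}"
    have "0 \<le> Vp b h l x" unfolding Vp_def using h0 by simp
    then show "0 \<le> Vp b h l x * (v x)\<^sup>2 * wgt h x" using wp[OF x] by simp
  qed
  define s where "s = wm / 2"
  have s: "0 < s" "s \<le> D" using wm0 D1 by (auto simp: s_def)
  have tr: "s * (v 0)\<^sup>2 \<le> 2 * integral {0..s} (\<lambda>x. (v x)\<^sup>2) + 2 * s\<^sup>2 * integral {0..D} (\<lambda>t. (g t)\<^sup>2)"
    by (rule trace_ineq[OF s A(4) A(5) A(6) A(3)])
  have vc: "continuous_on {0..D} (\<lambda>x. (v x)\<^sup>2)" by (intro continuous_intros A(4))
  have vi: "(\<lambda>x. (v x)\<^sup>2) integrable_on {0..D}" by (rule integrable_continuous_interval[OF vc])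
  have vis: "(\<lambda>x. (v x)\<^sup>2) integrable_on {0..s}" by (rule integrable_on_subinterval[OF vi]) (use s in auto)
  have "integral {0..s} (\<lambda>x. (v x)\<^sup>2) \<le> integral {0..D} (\<lambda>x. (v x)\<^sup>2)"
    by (rule integral_subset_le[OF _ vis vi]) (use s in auto)
  also have "\<dots> \<le> integral {0..D} (\<lambda>\<tau>. (v \<tau>)\<^sup>2 * wgt h \<tau> / wm)"
  proof (rule integral_le[OF vi])
    show "(\<lambda>\<tau>. (v \<tau>)\<^sup>2 * wgt h \<tau> / wm) integrable_on {0..D}"
      using F(3) by (rule integrable_on_divide)
    fix x assume x: "x \<in> {0..D}"
    have "(v x)\<^sup>2 * wm \<le> (v x)\<^sup>2 * wgt h x" by (intro mult_left_mono wl x) simp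
    then show "(v x)\<^sup>2 \<le> (v x)\<^sup>2 * wgt h x / wm" using wm0 by (simp add: pos_le_divide_eq)
  qed
  also have "\<dots> = N / wm" by (simp add: N_def)
  finally have A1: "integral {0..s} (\<lambda>x. (v x)\<^sup>2) \<le> N / wm" .
  have "wm * integral {0..D} (\<lambda>t. (g t)\<^sup>2) = integral {0..D} (\<lambda>t. wm * (g t)\<^sup>2)" by simp
  also have "\<dots> \<le> Gw" unfolding Gw_def
  proof (rule integral_le[OF _ F(4)])
    show "(\<lambda>t. wm * (g t)\<^sup>2) integrable_on {0..D}" by (rule integrable_on_mult_right[OF A(6)])
    fix x assume x: "x \<in> {0..D}"
    show "wm * (g x)\<^sup>2 \<le> (g x)\<^sup>2 * wgt h x" using mult_left_mono[OF wl[OF x], of "(g x)\<^sup>2"] by (simp add: mult.commute)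
  qed
  finally have A2: "wm * integral {0..D} (\<lambda>t. (g t)\<^sup>2) \<le> Gw" .
  have "s * (v 0)\<^sup>2 \<le> 2 * (N / wm) + 2 * s\<^sup>2 * integral {0..D} (\<lambda>t. (g t)\<^sup>2)"
    using tr A1 by linarith
  then have "(v 0)\<^sup>2 \<le> (2 * (N / wm) + 2 * s\<^sup>2 * integral {0..D} (\<lambda>t. (g t)\<^sup>2)) / s"
    using s by (simp add: pos_le_divide_eq mult.commute)
  also have "\<dots> = (4 / wm\<^sup>2) * N + wm * integral {0..D} (\<lambda>t. (g t)\<^sup>2)"
    using wm0 by (simp add: s_def field_simps power2_eq_square)
  finally have "(v 0)\<^sup>2 \<le> (4 / wm\<^sup>2) * N + Gw" using A2 by linarith
  then show "- (4 / (1 - h powr \<rho>)\<^sup>2) * wnorm2 \<rho> h v \<le> qform b \<rho> h l v g"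
    using F(1) F(2)[of b l] P0 by (simp add: N_def Gw_def P_def wm_def)
qed

lemma Vp_gap:
  fixes b w :: real and m :: int
  assumes b: "b > 0" and m: "\<bar>real_of_int m\<bar> > b" and w: "0 < wgt h \<tau>" "wgt h \<tau> \<le> 1"
  shows "h * ((real_of_int m)\<^sup>2 - \<bar>real_of_int m\<bar> * b) \<le> Vp b h m \<tau> - Vp b h 0 \<tau>"
proof -
  define W where "W = wgt h \<tau>"
  define c where "c = b/2 * W\<^sup>2"
  define M where "M = real_of_int m"
  have W: "0 < W" "W \<le> 1" using w by (auto simp: W_def)
  have W2: "0 < W\<^sup>2" "W\<^sup>2 \<le> 1" using W by (auto simp: power_le_one)
  have c0: "0 \<le> c" "2 * c \<le> b" using W2 b by (auto simp: c_def)
  have "2 * M * c \<le> \<bar>M\<bar> * (2 * c)"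
    using c0 by (metis abs_ge_self abs_mult abs_of_nonneg mult.assoc mult.commute mult_nonneg_nonneg zero_le_numeral abs_le_iff)
  also have "\<dots> \<le> \<bar>M\<bar> * b" by (rule mult_left_mono[OF c0(2)]) simp
  finally have X: "M\<^sup>2 - \<bar>M\<bar> * b \<le> M\<^sup>2 - 2 * M * c" by linarith
  have X0: "0 \<le> M\<^sup>2 - \<bar>M\<bar> * b"
  proof -
    have "\<bar>M\<bar> * b \<le> \<bar>M\<bar> * \<bar>M\<bar>" using m by (intro mult_left_mono) (auto simp: M_def)
    then show ?thesis by (simp add: power2_eq_square abs_mult_self_eq)
  qed
  have "Vp b h m \<tau> - Vp b h 0 \<tau> = h / W\<^sup>2 * (M\<^sup>2 - 2 * M * c)"
    unfolding Vp_def W_def[symmetric] c_def[symmetric] M_def[symmetric]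
    by (simp add: power2_eq_square algebra_simps)
  moreover have "h * (M\<^sup>2 - \<bar>M\<bar> * b) \<le> h / W\<^sup>2 * (M\<^sup>2 - 2 * M * c)"
  proof (rule mult_mono[OF _ X _ X0])
    show "h \<le> h / W\<^sup>2" using W2 h0 by (simp add: le_divide_eq)
    show "0 \<le> h / W\<^sup>2" using h0 by simp
  qed
  ultimately show ?thesis by (simp add: M_def)
qed

lemma compare:
  assumes H: "H1_dirichlet_right (h powr (\<rho> - 1/2)) v g" and b: "b > 0" and m: "\<bar>real_of_int m\<bar> > b"
  shows "qform b \<rho> h 0 v g + h * ((real_of_int m)\<^sup>2 - \<bar>real_of_int m\<bar> * b) * wnorm2 \<rho> h v \<le> qform b \<rho> h m v g"
proof -
  define D where "D = h powr (\<rho> - 1/2)"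
  define k where "k = h * ((real_of_int m)\<^sup>2 - \<bar>real_of_int m\<bar> * b)"
  note F = forms_eq[OF H, folded D_def]
  have wp: "\<And>\<tau>. \<tau> \<in> {0..D} \<Longrightarrow> 0 < wgt h \<tau>" using wpos by (simp add: D_def)
  have w1: "\<And>\<tau>. \<tau> \<in> {0..D} \<Longrightarrow> wgt h \<tau> \<le> 1" using wgt_bounds(2)[OF h0 h1 r0 r1] by (simp add: D_def)
  have "integral {0..D} (\<lambda>\<tau>. k * ((v \<tau>)\<^sup>2 * wgt h \<tau>))
     \<le> integral {0..D} (\<lambda>\<tau>. Vp b h m \<tau> * (v \<tau>)\<^sup>2 * wgt h \<tau> - Vp b h 0 \<tau> * (v \<tau>)\<^sup>2 * wgt h \<tau>)"
  proof (rule integral_le)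
    show "(\<lambda>\<tau>. k * ((v \<tau>)\<^sup>2 * wgt h \<tau>)) integrable_on {0..D}" by (rule integrable_on_mult_right[OF F(3)])
    show "(\<lambda>\<tau>. Vp b h m \<tau> * (v \<tau>)\<^sup>2 * wgt h \<tau> - Vp b h 0 \<tau> * (v \<tau>)\<^sup>2 * wgt h \<tau>) integrable_on {0..D}"
      by (rule integrable_diff[OF F(5) F(5)])
    fix x assume x: "x \<in> {0..D}"
    have "k \<le> Vp b h m x - Vp b h 0 x" unfolding k_def by (rule Vp_gap[OF b m wp[OF x] w1[OF x]])
    moreover have "0 \<le> (v x)\<^sup>2 * wgt h x" using wp[OF x] by simp
    ultimately have "k * ((v x)\<^sup>2 * wgt h x) \<le> (Vp b h m x - Vp b h 0 x) * ((v x)\<^sup>2 * wgt h x)"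
      by (rule mult_right_mono)
    then show "k * ((v x)\<^sup>2 * wgt h x) \<le> Vp b h m x * (v x)\<^sup>2 * wgt h x - Vp b h 0 x * (v x)\<^sup>2 * wgt h x"
      by (simp add: algebra_simps)
  qed
  also have "\<dots> = integral {0..D} (\<lambda>\<tau>. Vp b h m \<tau> * (v \<tau>)\<^sup>2 * wgt h \<tau>) - integral {0..D} (\<lambda>\<tau>. Vp b h 0 \<tau> * (v \<tau>)\<^sup>2 * wgt h \<tau>)"
    by (rule integral_diff[OF F(5) F(5)])
  finally show ?thesis using F(1) F(2)[of b m] F(2)[of b 0] by (simp add: k_def)
qed

lemma witness: "\<exists>v g. H1_dirichlet_right (h powr (\<rho> - 1/2)) v g \<and> wnorm2 \<rho> h v \<noteq> 0"
proof -
  define D where "D = h powr (\<rho> - 1/2)"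
  define wm where "wm = 1 - h powr \<rho>"
  have D1: "D > 1" unfolding D_def by (rule basic_params(1)[OF h0 h1 r0 r1])
  have wm0: "0 < wm" using basic_params(3)[OF h0 h1 r0 r1] by (auto simp: wm_def)
  have wl: "\<And>\<tau>. \<tau> \<in> {0..D} \<Longrightarrow> wm \<le> wgt h \<tau>"
    using wgt_bounds(1)[OF h0 h1 r0 r1] by (simp add: D_def wm_def)
  define v where "v = (\<lambda>\<tau>::real. D - \<tau>)"
  define g where "g = (\<lambda>\<tau>::real. - 1::real)"
  have H: "H1_dirichlet_right D v g"
    unfolding H1_dirichlet_right_def
  proof (intro conjI ballI)
    show "g \<in> borel_measurable lborel" by (simp add: g_def)
    show "set_integrable lborel {0..D} (\<lambda>t. (g t)\<^sup>2)"
      by (rule borel_integrable_atLeastAtMost') (simp add: g_def)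
    fix x :: real
    have "(LBINT t=ereal 0..ereal x. (-1::real)) = -1 * (x - 0)" by (rule interval_integral_const(2))
    then show "v x = v 0 + (LBINT t=0..x. g t)" by (simp add: zero_ereal_def v_def g_def)
  next
    show "v D = 0" by (simp add: v_def)
  qed
  then have HH: "H1_dirichlet_right (h powr (\<rho> - 1/2)) v g" by (simp add: D_def)
  note F = forms_eq[OF HH, folded D_def]
  define P where "P = (\<lambda>\<tau>::real. - ((D - \<tau>) ^ 3) / 3)"
  have FTC: "((\<lambda>\<tau>. (D - \<tau>)\<^sup>2) has_integral (P D - P 0)) {0..D}"
  proof (rule fundamental_theorem_of_calculus)
    show "0 \<le> D" using D1 by simp
    fix x assume "x \<in> {0..D}"
    have "(P has_real_derivative (D - x)\<^sup>2) (at x within {0..D})"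
      unfolding P_def by (auto intro!: derivative_eq_intros simp: power2_eq_square)
    then show "(P has_vector_derivative (D - x)\<^sup>2) (at x within {0..D})"
      by (simp add: has_real_derivative_iff_has_vector_derivative)
  qed
  then have I3: "integral {0..D} (\<lambda>\<tau>. (D - \<tau>)\<^sup>2) = D^3 / 3" by (simp add: integral_unique P_def)
  have "integral {0..D} (\<lambda>\<tau>. wm * (D - \<tau>)\<^sup>2) \<le> integral {0..D} (\<lambda>\<tau>. (v \<tau>)\<^sup>2 * wgt h \<tau>)"
  proof (rule integral_le[OF _ F(3)])
    show "(\<lambda>\<tau>. wm * (D - \<tau>)\<^sup>2) integrable_on {0..D}"
      by (rule integrable_on_mult_right) (use FTC in blast)
    fix x assume x: "x \<in> {0..D}"
    show "wm * (D - x)\<^sup>2 \<le> (v x)\<^sup>2 * wgt h x"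
      using mult_left_mono[OF wl[OF x], of "(D - x)\<^sup>2"] by (simp add: v_def mult.commute)
  qed
  moreover have "integral {0..D} (\<lambda>\<tau>. wm * (D - \<tau>)\<^sup>2) = wm * (D^3 / 3)" using I3 by simp
  moreover have "0 < wm * (D^3 / 3)" using wm0 D1 by simp
  ultimately have "0 < wnorm2 \<rho> h v" using F(1) by linarith
  then show ?thesis using HH by auto
qed

end

theorem proposition2p6:
  fixes b \<rho> h :: real and m :: int
  assumes "b > 0" and "1/4 < \<rho>" and "\<rho> < 1/2" and "0 < h" and "h < 1"
    and "\<bar>real_of_int m\<bar> > (1 + sqrt 2) * b / 2"
  shows "lambda1 b \<rho> m h > (INF l::int. lambda1 b \<rho> l h)"
proof -
  note hr = assms(4) assms(5) _ assms(3)
  have r0: "0 < \<rho>" using assms(2) by simp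
  define S where "S l = {qform b \<rho> h l v g / wnorm2 \<rho> h v | v g.
            H1_dirichlet_right (h powr (\<rho> - 1/2)) v g \<and> wnorm2 \<rho> h v \<noteq> 0}" for l
  have lam: "lambda1 b \<rho> l h = Inf (S l)" for l by (simp add: lambda1_def S_def)
  define C where "C = 4 / (1 - h powr \<rho>)\<^sup>2"
  have ne: "S l \<noteq> {}" for l
    using witness[OF assms(4) assms(5) r0 assms(3)] unfolding S_def by blast
  have lb: "- C \<le> x" if "x \<in> S l" for x l
  proof -
    obtain v g where x: "x = qform b \<rho> h l v g / wnorm2 \<rho> h v"
      and H: "H1_dirichlet_right (h powr (\<rho> - 1/2)) v g" and N: "wnorm2 \<rho> h v \<noteq> 0"
      using \<open>x \<in> S l\<close> unfolding S_def by blast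
    have Np: "0 < wnorm2 \<rho> h v" using bounds(1)[OF assms(4) assms(5) r0 assms(3) H] N by simp
    have "- C * wnorm2 \<rho> h v \<le> qform b \<rho> h l v g"
      using bounds(2)[OF assms(4) assms(5) r0 assms(3) H, of b l] by (simp add: C_def)
    then show ?thesis using Np by (simp add: x le_divide_eq)
  qed
  have bdd: "bdd_below (S l)" for l using lb by (meson bdd_below.I)
  have lam_lb: "- C \<le> lambda1 b \<rho> l h" for l
    unfolding lam by (rule cInf_greatest[OF ne]) (rule lb)
  have bddr: "bdd_below (range (\<lambda>l. lambda1 b \<rho> l h))"
    by (rule bdd_belowI[of _ "- C"]) (use lam_lb in auto)
  have I0: "(INF l. lambda1 b \<rho> l h) \<le> lambda1 b \<rho> 0 h"
    by (rule cINF_lower[OF bddr]) simp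
  have "1 < sqrt 2" by simp
  then have "b < (1 + sqrt 2) * b / 2" using assms(1) by (simp add: field_simps)
  then have bm: "\<bar>real_of_int m\<bar> > b" using assms(6) by linarith
  define k where "k = h * ((real_of_int m)\<^sup>2 - \<bar>real_of_int m\<bar> * b)"
  have kp: "0 < k"
  proof -
    have "\<bar>real_of_int m\<bar> * b < \<bar>real_of_int m\<bar> * \<bar>real_of_int m\<bar>"
      using bm assms(1) by (intro mult_strict_left_mono) auto
    then show ?thesis using assms(4) by (simp add: k_def power2_eq_square abs_mult_self_eq)
  qed
  have "lambda1 b \<rho> 0 h + k \<le> lambda1 b \<rho> m h"
    unfolding lam[of m]
  proof (rule cInf_greatest[OF ne])
    fix x assume "x \<in> S m"
    then obtain v g where x: "x = qform b \<rho> h m v g / wnorm2 \<rho> h v"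
      and H: "H1_dirichlet_right (h powr (\<rho> - 1/2)) v g" and N: "wnorm2 \<rho> h v \<noteq> 0"
      unfolding S_def by blast
    have Np: "0 < wnorm2 \<rho> h v" using bounds(1)[OF assms(4) assms(5) r0 assms(3) H] N by simp
    have mem: "qform b \<rho> h 0 v g / wnorm2 \<rho> h v \<in> S 0" using H N unfolding S_def by blast
    have L0: "lambda1 b \<rho> 0 h \<le> qform b \<rho> h 0 v g / wnorm2 \<rho> h v"
      unfolding lam[of 0] by (rule cInf_lower[OF mem bdd])
    have "qform b \<rho> h 0 v g + k * wnorm2 \<rho> h v \<le> qform b \<rho> h m v g"
      using compare[OF assms(4) assms(5) r0 assms(3) H assms(1) bm] by (simp add: k_def)
    then have "(qform b \<rho> h 0 v g + k * wnorm2 \<rho> h v) / wnorm2 \<rho> h v \<le> x"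
      using Np unfolding x by (intro divide_right_mono) auto
    moreover have "(qform b \<rho> h 0 v g + k * wnorm2 \<rho> h v) / wnorm2 \<rho> h v
        = qform b \<rho> h 0 v g / wnorm2 \<rho> h v + k" using Np by (simp add: add_divide_distrib)
    ultimately have "qform b \<rho> h 0 v g / wnorm2 \<rho> h v + k \<le> x" by simp
    with L0 show "lambda1 b \<rho> 0 h + k \<le> x" by linarith
  qed
  then show ?thesis using I0 kp by linarith
qed

end
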